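(* There exists a compactly quasinilpotent Banach algebra which has no non-zero hypocompact ideals. (For example, $A=V\widehat{\otimes}C[0,1]$, where $V=\ell^1(w)$ with convolution $e_ie_j=e_{i+j}$ for a weight $w=(w_k)_{k\ge1}$ with $w_{k+1}/w_k\to0$, e.g. $w_k=k^{-k}$; this $A$ has no non-zero compact elements.)
   Context: For a bounded subset $M$ of a normed algebra, $\|M\|=\sup_{a\in M}\|a\|$, $M^n=\{a_1\cdots a_n:a_i\in M\}$ and $\rho(M)=\lim_n\|M^n\|^{1/n}$. A Banach algebra $A$ is compactly quasinilpotent if $\rho(M)=0$ for every precompact $M\subseteq A$. An element $a$ of a normed algebra $A$ is compact if the operator $x\mapsto axa$ on $A$ is compact. A normed algebra is hypocompact if every non-zero quotient $A/J$ by a closed ideal $J$ has a non-zero compact element; an ideal is hypocompact if it is hypocompact as a normed algebra. $\widehat\otimes$ is the projective tensor product; $\ell^1(w)$ is the space of sequences $\sum\lambda_ke_k$ with $\sum|\lambda_k|w_k<\infty$. *)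

theory Defs
  imports "HOL-Analysis.Analysis"
begin

text \<open>A complex normed algebra presented concretely on a carrier set inside an
ambient type (so that one can quantify existentially over algebras).\<close>

record 'a balg =
  ba_carrier :: "'a set"
  ba_zero :: 'a
  ba_add :: "'a \<Rightarrow> 'a \<Rightarrow> 'a"
  ba_neg :: "'a \<Rightarrow> 'a"
  ba_smul :: "complex \<Rightarrow> 'a \<Rightarrow> 'a"
  ba_mul :: "'a \<Rightarrow> 'a \<Rightarrow> 'a"
  ba_norm :: "'a \<Rightarrow> real"

definition ba_sub :: "'a balg \<Rightarrow> 'a \<Rightarrow> 'a \<Rightarrow> 'a" where
  "ba_sub A x y = ba_add A x (ba_neg A y)"

definition normed_algebra :: "'a balg \<Rightarrow> bool" where
  "normed_algebra A \<longleftrightarrow>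
    (let C = ba_carrier A; z = ba_zero A; p = ba_add A; m = ba_mul A;
         s = ba_smul A; n = ba_norm A in
     z \<in> C \<and>
     (\<forall>x\<in>C. \<forall>y\<in>C. p x y \<in> C \<and> m x y \<in> C) \<and>
     (\<forall>x\<in>C. ba_neg A x \<in> C) \<and>
     (\<forall>c. \<forall>x\<in>C. s c x \<in> C) \<and>
     (\<forall>x\<in>C. \<forall>y\<in>C. \<forall>w\<in>C. p (p x y) w = p x (p y w)) \<and>
     (\<forall>x\<in>C. \<forall>y\<in>C. p x y = p y x) \<and>
     (\<forall>x\<in>C. p x z = x) \<and>
     (\<forall>x\<in>C. p x (ba_neg A x) = z) \<and>
     (\<forall>c. \<forall>x\<in>C. \<forall>y\<in>C. s c (p x y) = p (s c x) (s c y)) \<and>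
     (\<forall>c d. \<forall>x\<in>C. s (c + d) x = p (s c x) (s d x)) \<and>
     (\<forall>c d. \<forall>x\<in>C. s (c * d) x = s c (s d x)) \<and>
     (\<forall>x\<in>C. s 1 x = x) \<and>
     (\<forall>x\<in>C. \<forall>y\<in>C. \<forall>w\<in>C. m (m x y) w = m x (m y w)) \<and>
     (\<forall>x\<in>C. \<forall>y\<in>C. \<forall>w\<in>C. m x (p y w) = p (m x y) (m x w)) \<and>
     (\<forall>x\<in>C. \<forall>y\<in>C. \<forall>w\<in>C. m (p x y) w = p (m x w) (m y w)) \<and>
     (\<forall>c. \<forall>x\<in>C. \<forall>y\<in>C. m (s c x) y = s c (m x y) \<and> m x (s c y) = s c (m x y)) \<and>
     (\<forall>x\<in>C. 0 \<le> n x \<and> (n x = 0 \<longleftrightarrow> x = z)) \<and>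
     (\<forall>x\<in>C. \<forall>y\<in>C. n (p x y) \<le> n x + n y) \<and>
     (\<forall>c. \<forall>x\<in>C. n (s c x) = cmod c * n x) \<and>
     (\<forall>x\<in>C. \<forall>y\<in>C. n (m x y) \<le> n x * n y))"

definition banach_algebra :: "'a balg \<Rightarrow> bool" where
  "banach_algebra A \<longleftrightarrow> normed_algebra A \<and>
    (\<forall>f. (\<forall>k. f k \<in> ba_carrier A) \<and>
         (\<forall>e>0. \<exists>N. \<forall>i\<ge>N. \<forall>j\<ge>N. ba_norm A (ba_sub A (f i) (f j)) < e)
       \<longrightarrow> (\<exists>l\<in>ba_carrier A. (\<lambda>k. ba_norm A (ba_sub A (f k) l)) \<longlonglongrightarrow> 0))"

definition ba_precompact :: "'a balg \<Rightarrow> 'a set \<Rightarrow> bool" where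
  "ba_precompact A M \<longleftrightarrow> M \<subseteq> ba_carrier A \<and>
    (\<forall>e>0. \<exists>F. finite F \<and> F \<subseteq> ba_carrier A \<and>
       (\<forall>x\<in>M. \<exists>y\<in>F. ba_norm A (ba_sub A x y) < e))"

text \<open>\<open>ba_setpow A M n\<close> is \<open>M^(n+1)\<close>.\<close>
fun ba_setpow :: "'a balg \<Rightarrow> 'a set \<Rightarrow> nat \<Rightarrow> 'a set" where
  "ba_setpow A M 0 = M"
| "ba_setpow A M (Suc n) = {ba_mul A x y | x y. x \<in> M \<and> y \<in> ba_setpow A M n}"

definition ba_setnorm :: "'a balg \<Rightarrow> 'a set \<Rightarrow> real" where
  "ba_setnorm A M = Sup (insert 0 (ba_norm A ` M))"

text \<open>\<open>\<rho>(M) = lim \<parallel>M^n\<parallel>^(1/n)\<close>; the limit always exists for bounded \<open>M\<close>,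
  so \<open>\<rho>(M) = 0\<close> means the sequence tends to 0.\<close>
definition compactly_quasinilpotent :: "'a balg \<Rightarrow> bool" where
  "compactly_quasinilpotent A \<longleftrightarrow>
    (\<forall>M. ba_precompact A M \<longrightarrow>
      (\<lambda>n. ba_setnorm A (ba_setpow A M n) powr (1 / real (Suc n))) \<longlonglongrightarrow> 0)"

definition ba_ideal :: "'a balg \<Rightarrow> 'a set \<Rightarrow> 'a set \<Rightarrow> bool" where
  "ba_ideal A S J \<longleftrightarrow> J \<subseteq> S \<and> ba_zero A \<in> J \<and>
    (\<forall>x\<in>J. \<forall>y\<in>J. ba_add A x y \<in> J) \<and>
    (\<forall>c. \<forall>x\<in>J. ba_smul A c x \<in> J) \<and>
    (\<forall>a\<in>S. \<forall>x\<in>J. ba_mul A a x \<in> J \<and> ba_mul A x a \<in> J)"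

definition ba_closed_in :: "'a balg \<Rightarrow> 'a set \<Rightarrow> 'a set \<Rightarrow> bool" where
  "ba_closed_in A S J \<longleftrightarrow>
    (\<forall>f x. (\<forall>k. f k \<in> J) \<and> x \<in> S \<and> (\<lambda>k. ba_norm A (ba_sub A (f k) x)) \<longlonglongrightarrow> 0
       \<longrightarrow> x \<in> J)"

definition ba_qnorm :: "'a balg \<Rightarrow> 'a set \<Rightarrow> 'a \<Rightarrow> real" where
  "ba_qnorm A J x = Inf ((\<lambda>j. ba_norm A (ba_sub A x j)) ` J)"

text \<open>\<open>a + J\<close> is a compact element of \<open>S/J\<close>: the operator \<open>x+J \<mapsto> axa+J\<close> on \<open>S/J\<close>
  maps the closed unit ball onto a precompact set (quotient norm).\<close>
definition ba_compact_elem_quot :: "'a balg \<Rightarrow> 'a set \<Rightarrow> 'a set \<Rightarrow> 'a \<Rightarrow> bool" where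
  "ba_compact_elem_quot A S J a \<longleftrightarrow>
    (\<forall>e>0. \<exists>F. finite F \<and> F \<subseteq> S \<and>
       (\<forall>x\<in>S. ba_qnorm A J x \<le> 1 \<longrightarrow>
          (\<exists>y\<in>F. ba_qnorm A J (ba_sub A (ba_mul A a (ba_mul A x a)) y) < e)))"

definition ba_hypocompact :: "'a balg \<Rightarrow> 'a set \<Rightarrow> bool" where
  "ba_hypocompact A S \<longleftrightarrow>
    (\<forall>J. ba_ideal A S J \<and> ba_closed_in A S J \<and> J \<noteq> S \<longrightarrow>
       (\<exists>a\<in>S. a \<notin> J \<and> ba_compact_elem_quot A S J a))"

end

theory Submission
  imports Defs "HOL-Library.Nat_Bijection"
begin


definition wt :: "nat \<Rightarrow> real" where "wt L = (1/2)^(L*L)"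
definition bnd :: "(nat list \<Rightarrow> complex) \<Rightarrow> bool" where
  "bnd g \<longleftrightarrow> g [] = 0 \<and> bdd_above (range (\<lambda>W. cmod (g W) * wt (length W)))"
definition nrm :: "(nat list \<Rightarrow> complex) \<Rightarrow> real" where
  "nrm g = (SUP W. cmod (g W) * wt (length W))"
definition conv :: "(nat list \<Rightarrow> complex) \<Rightarrow> (nat list \<Rightarrow> complex) \<Rightarrow> nat list \<Rightarrow> complex" where
  "conv a b = (\<lambda>W. \<Sum>i<length W. a (take i W) * b (drop i W))"

lemma wt_pos: "0 < wt L" by (simp add: wt_def)
lemma wt_le1: "wt L \<le> 1" by (simp add: wt_def power_le_one)
lemma wt_add: "wt (i+j) = wt i * wt j * (1/2)^(2*i*j)"
proof -
  have "(i+j)*(i+j) = i*i + j*j + 2*i*j" by (simp add: algebra_simps)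
  then show ?thesis by (simp add: wt_def power_add)
qed

lemma nrm_upper: "bnd g \<Longrightarrow> cmod (g W) * wt (length W) \<le> nrm g"
  unfolding bnd_def nrm_def by (auto intro: cSUP_upper)
lemma nrm_least: "(\<And>W. cmod (g W) * wt (length W) \<le> B) \<Longrightarrow> nrm g \<le> B"
  unfolding nrm_def by (rule cSUP_least) auto
lemma bnd_intro: "g [] = 0 \<Longrightarrow> (\<And>W. cmod (g W) * wt (length W) \<le> B) \<Longrightarrow> bnd g"
  unfolding bnd_def bdd_above_def by auto
lemma nrm_nonneg: "bnd g \<Longrightarrow> 0 \<le> nrm g"
  proof -
  assume "bnd g"
  moreover have "0 \<le> cmod (g []) * wt (length ([]::nat list))" using wt_pos[of 0] by simp
  ultimately show ?thesis using nrm_upper[of g "[]"] by linarith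
qed
lemma nrm_zero: "nrm (\<lambda>_. 0) = 0"
  unfolding nrm_def by simp
lemma nrm_eq0: "bnd g \<Longrightarrow> nrm g = 0 \<longleftrightarrow> g = (\<lambda>_. 0)"
proof
  assume b: "bnd g" and n: "nrm g = 0"
  show "g = (\<lambda>_. 0)"
  proof
    fix W
    have "cmod (g W) * wt (length W) \<le> 0" using nrm_upper[OF b, of W] n by simp
    then show "g W = 0" using wt_pos[of "length W"]
      by (auto simp: mult_le_0_iff)
  qed
qed (simp add: nrm_zero)

lemma pow2_ge: "1 \<le> n \<Longrightarrow> real n \<le> 2^(n-1)"
proof (induction n)
  case (Suc n) then show ?case by (cases n) auto
qed simp

lemma pow_ineq:
  assumes "1 \<le> i" "1 \<le> j" "k \<le> j"
  shows "(1/2::real)^(2*i*j) \<le> (1/2)^k / real (i+j)"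
proof -
  have ij: "i + j - 1 \<le> i*j"
  proof -
    obtain i' j' where "i = Suc i'" "j = Suc j'" using assms by (metis Suc_le_D One_nat_def)
    then show ?thesis by simp
  qed
  have "j \<le> i*j" using assms by simp
  with ij have "i + j - 1 + k \<le> 2*i*j" using assms by linarith
  then have "(1/2::real)^(2*i*j) \<le> (1/2)^(i+j-1+k)" by (rule power_decreasing) auto
  also have "\<dots> = (1/2)^(i+j-1) * (1/2)^k" by (simp add: power_add)
  also have "(1/2::real)^(i+j-1) \<le> 1 / real (i+j)"
  proof -
    have "real (i+j) \<le> 2^(i+j-1)" using pow2_ge[of "i+j"] assms by simp
    then show ?thesis using assms by (simp add: field_simps power_divide)
  qed
  then have "(1/2::real)^(i+j-1) * (1/2)^k \<le> 1 / real (i+j) * (1/2)^k"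
    by (rule mult_right_mono) simp
  finally show ?thesis by simp
qed

lemma conv_bound:
  assumes a: "bnd a" and b: "bnd b" and bk: "\<And>q. length q < k \<Longrightarrow> b q = 0"
  shows "cmod (conv a b W) * wt (length W) \<le> (1/2)^k * nrm a * nrm b"
proof -
  define L where "L = length W"
  define C where "C = (1/2::real)^k * nrm a * nrm b"
  have C0: "0 \<le> C" unfolding C_def using nrm_nonneg[OF a] nrm_nonneg[OF b] by simp
  have tm: "cmod (a (take i W) * b (drop i W)) * wt L \<le> C / real L" if i: "i < L" for i
  proof (cases "i = 0 \<or> L - i < k")
    case True
    then have "a (take i W) * b (drop i W) = 0"
      using a bk[of "drop i W"] unfolding bnd_def L_def by auto
    then show ?thesis using C0 by (simp only: norm_zero mult_zero_left) simp
  next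
    case False
    define j where "j = L - i"
    have ij: "1 \<le> i" "1 \<le> j" "k \<le> j" "L = i + j" using False i unfolding j_def by auto
    have lt: "length (take i W) = i" "length (drop i W) = j" using i unfolding j_def L_def by auto
    have "cmod (a (take i W) * b (drop i W)) * wt L =
        (cmod (a (take i W)) * wt i) * (cmod (b (drop i W)) * wt j) * (1/2)^(2*i*j)"
      by (simp add: ij(4) wt_add norm_mult)
    also have "\<dots> \<le> nrm a * nrm b * ((1/2)^k / real (i+j))"
      apply (rule mult_mono)
        apply (rule mult_mono)
      using nrm_upper[OF a, of "take i W"] nrm_upper[OF b, of "drop i W"] lt pow_ineq[OF ij(1-3)]
           nrm_nonneg[OF a] nrm_nonneg[OF b] wt_pos[THEN less_imp_le] by auto
    also have "\<dots> = C / real L" by (simp add: C_def ij(4))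
    finally show ?thesis .
  qed
  have "cmod (conv a b W) * wt L \<le> (\<Sum>i<L. cmod (a (take i W) * b (drop i W))) * wt L"
    unfolding conv_def L_def by (rule mult_right_mono) (auto intro: norm_sum simp: wt_pos less_imp_le)
  also have "\<dots> = (\<Sum>i<L. cmod (a (take i W) * b (drop i W)) * wt L)" by (simp add: sum_distrib_right)
  also have "\<dots> \<le> real (card {..<L}) * (C / real L)"
    by (rule sum_bounded_above) (use tm in auto)
  also have "\<dots> \<le> C" using C0 by (cases "L = 0") auto
  finally show ?thesis unfolding C_def L_def .
qed

lemma conv_nil: "conv a b [] = 0" by (simp add: conv_def)

lemma bnd_conv: "bnd a \<Longrightarrow> bnd b \<Longrightarrow> bnd (conv a b)"
  using conv_bound[of a b 0] by (intro bnd_intro[where B = "nrm a * nrm b"]) (auto simp: conv_nil)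

lemma nrm_conv_k: "bnd a \<Longrightarrow> bnd b \<Longrightarrow> (\<And>q. length q < k \<Longrightarrow> b q = 0) \<Longrightarrow>
   nrm (conv a b) \<le> (1/2)^k * nrm a * nrm b"
  by (rule nrm_least) (rule conv_bound)

lemma nrm_conv: "bnd a \<Longrightarrow> bnd b \<Longrightarrow> nrm (conv a b) \<le> nrm a * nrm b"
  using nrm_conv_k[of a b 0] by simp




lemma add_pt: "bnd g \<Longrightarrow> bnd h \<Longrightarrow> cmod (g W + h W) * wt (length W) \<le> nrm g + nrm h"
proof -
  assume g: "bnd g" and h: "bnd h"
  have "cmod (g W + h W) * wt (length W) \<le> (cmod (g W) + cmod (h W)) * wt (length W)"
    by (rule mult_right_mono) (auto intro: norm_triangle_ineq less_imp_le wt_pos)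
  also have "\<dots> \<le> nrm g + nrm h" using nrm_upper[OF g, of W] nrm_upper[OF h, of W]
    by (simp add: distrib_right)
  finally show ?thesis .
qed
lemma bnd_add: "bnd g \<Longrightarrow> bnd h \<Longrightarrow> bnd (\<lambda>W. g W + h W)"
  by (rule bnd_intro[where B="nrm g + nrm h"]) (auto simp: bnd_def add_pt)
lemma nrm_add: "bnd g \<Longrightarrow> bnd h \<Longrightarrow> nrm (\<lambda>W. g W + h W) \<le> nrm g + nrm h"
  by (rule nrm_least) (rule add_pt)
lemma bnd_smul: "bnd g \<Longrightarrow> bnd (\<lambda>W. c * g W)"
  apply (rule bnd_intro[where B="cmod c * nrm g"])
   apply (simp add: bnd_def)
  subgoal for W using nrm_upper[of g W] by (simp add: norm_mult mult.assoc mult_left_mono)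
  done
lemma nrm_smul_le: "bnd g \<Longrightarrow> nrm (\<lambda>W. c * g W) \<le> cmod c * nrm g"
  apply (rule nrm_least)
  subgoal for W using nrm_upper[of g W] by (simp add: norm_mult mult.assoc mult_left_mono)
  done
lemma nrm_smul: "bnd g \<Longrightarrow> nrm (\<lambda>W. c * g W) = cmod c * nrm g"
proof (cases "c = 0")
  case True then show ?thesis by (simp add: nrm_zero)
next
  case False
  assume g: "bnd g"
  have "nrm g = nrm (\<lambda>W. inverse c * (c * g W))" using False by (simp add: mult.assoc[symmetric])
  also have "\<dots> \<le> cmod (inverse c) * nrm (\<lambda>W. c * g W)" by (rule nrm_smul_le[OF bnd_smul[OF g]])
  also have "\<dots> = nrm (\<lambda>W. c * g W) / cmod c" by (simp add: norm_inverse divide_inverse mult.commute)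
  finally have "cmod c * nrm g \<le> nrm (\<lambda>W. c * g W)" using False
    by (simp add: field_simps)
  with nrm_smul_le[OF g, of c] show ?thesis by simp
qed
lemma bnd_neg: "bnd g \<Longrightarrow> bnd (\<lambda>W. - g W)"
  using bnd_smul[of g "-1"] by simp
lemma nrm_neg: "bnd g \<Longrightarrow> nrm (\<lambda>W. - g W) = nrm g"
  using nrm_smul[of g "-1"] by simp
lemma bnd_zero: "bnd (\<lambda>_. 0)" by (rule bnd_intro[where B=0]) auto

lemma conv_add_right: "conv a (\<lambda>W. b W + c W) = (\<lambda>W. conv a b W + conv a c W)"
  by (simp add: conv_def distrib_left sum.distrib)
lemma conv_add_left: "conv (\<lambda>W. a W + b W) c = (\<lambda>W. conv a c W + conv b c W)"
  by (simp add: conv_def distrib_right sum.distrib)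
lemma conv_smul_left: "conv (\<lambda>W. s * a W) c = (\<lambda>W. s * conv a c W)"
  by (simp add: conv_def sum_distrib_left mult.assoc)
lemma conv_smul_right: "conv a (\<lambda>W. s * c W) = (\<lambda>W. s * conv a c W)"
  by (simp add: conv_def sum_distrib_left mult.left_commute)
lemma conv_zero_right: "conv a (\<lambda>_. 0) = (\<lambda>_. 0)" by (simp add: conv_def)

lemma swap_tri: "(\<Sum>j<L. \<Sum>i<j. F i j) = (\<Sum>i<L. \<Sum>j\<in>{Suc i..<L}. (F i j :: complex))"
proof (induction L)
  case (Suc L)
  have "(\<Sum>i<Suc L. \<Sum>j\<in>{Suc i..<Suc L}. F i j) = (\<Sum>i<L. \<Sum>j\<in>{Suc i..<Suc L}. F i j)"
    by simp
  also have "\<dots> = (\<Sum>i<L. (\<Sum>j\<in>{Suc i..<L}. F i j) + F i L)"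
    by (intro sum.cong refl) simp
  finally show ?case using Suc by (simp add: sum.distrib)
qed simp

lemma conv_assoc:
  assumes "b [] = 0"
  shows "conv (conv a b) c = conv a (conv b c)"
proof
  fix W :: "nat list"
  define L where "L = length W"
  define F where "F i j = a (take i W) * b (take (j - i) (drop i W)) * c (drop j W)" for i j
  have "conv (conv a b) c W = (\<Sum>j<L. \<Sum>i<j. F i j)"
    unfolding conv_def L_def F_def
    by (intro sum.cong refl) (simp add: sum_distrib_right min_def drop_take)
  also have "\<dots> = (\<Sum>i<L. \<Sum>j\<in>{Suc i..<L}. F i j)" by (rule swap_tri)
  also have "\<dots> = conv a (conv b c) W"
    unfolding conv_def L_def
  proof (intro sum.cong refl)
    fix i assume i: "i \<in> {..<length W}"
    have "(\<Sum>t<length (drop i W). b (take t (drop i W)) * c (drop t (drop i W)))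
       = (\<Sum>t\<in>{Suc 0..<length W - i}. b (take t (drop i W)) * c (drop t (drop i W)))"
    proof -
      have "{..<length W - i} = insert 0 {Suc 0..<length W - i}" using i by auto
      then show ?thesis using assms by simp
    qed
    also have "\<dots> = (\<Sum>j\<in>{Suc i..<length W}. b (take (j - i) (drop i W)) * c (drop j W))"
      apply (rule sum.reindex_bij_witness[where i="\<lambda>j. j - i" and j="\<lambda>t. t + i"])
      using i by (auto simp: add.commute)
    finally show "(\<Sum>j\<in>{Suc i..<length W}. F i j) =
        a (take i W) * (\<Sum>t<length (drop i W). b (take t (drop i W)) * c (drop t (drop i W)))"
      unfolding F_def by (simp add: sum_distrib_left mult.assoc)
  qed
  finally show "conv (conv a b) c W = conv a (conv b c) W" .
qed




lemma complete_core:
  fixes g :: "nat \<Rightarrow> nat list \<Rightarrow> complex"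
  assumes bg: "\<And>k. bnd (g k)"
    and cau: "\<forall>e>0. \<exists>N. \<forall>i\<ge>N. \<forall>j\<ge>N. nrm (\<lambda>W. g i W + - g j W) < e"
  shows "\<exists>l. bnd l \<and> (\<lambda>k. nrm (\<lambda>W. g k W + - l W)) \<longlonglongrightarrow> 0"
proof -
  have pt: "cmod (g i W - g j W) * wt (length W) \<le> nrm (\<lambda>W. g i W + - g j W)" for i j W
    using nrm_upper[OF bnd_add[OF bg[of i] bnd_neg[OF bg[of j]]], of W] by simp
  have "Cauchy (\<lambda>k. g k W)" for W
  proof (rule CauchyI)
    fix e :: real assume e: "0 < e"
    obtain N where N: "\<forall>i\<ge>N. \<forall>j\<ge>N. nrm (\<lambda>W. g i W + - g j W) < e * wt (length W)"
      using cau e wt_pos by (meson mult_pos_pos)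
    show "\<exists>M. \<forall>m\<ge>M. \<forall>n\<ge>M. norm (g m W - g n W) < e"
    proof (intro exI allI impI)
      fix m n assume "N \<le> m" "N \<le> n"
      then have "cmod (g m W - g n W) * wt (length W) < e * wt (length W)"
        using pt[where i=m and j=n and W=W] N by fastforce
      then show "norm (g m W - g n W) < e" using wt_pos[of "length W"] by simp
    qed
  qed
  then have conv: "(\<lambda>k. g k W) \<longlonglongrightarrow> lim (\<lambda>k. g k W)" for W
    by (simp add: Cauchy_convergent_iff convergent_LIMSEQ_iff)
  define l where "l W = lim (\<lambda>k. g k W)" for W
  have key: "\<exists>N. \<forall>i\<ge>N. \<forall>W. cmod (g i W - l W) * wt (length W) \<le> e" if e: "0 < e" for e
  proof -
    obtain N where N: "\<forall>i\<ge>N. \<forall>j\<ge>N. nrm (\<lambda>W. g i W + - g j W) < e" using cau e by blast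
    show ?thesis
    proof (intro exI allI impI)
      fix i W assume i: "N \<le> i"
      have "(\<lambda>j. cmod (g i W - g j W) * wt (length W)) \<longlonglongrightarrow> cmod (g i W - l W) * wt (length W)"
        unfolding l_def by (intro tendsto_intros conv)
      moreover have "\<forall>j\<ge>N. cmod (g i W - g j W) * wt (length W) \<le> e"
        using pt N i by (meson le_trans less_imp_le order_trans)
      ultimately show "cmod (g i W - l W) * wt (length W) \<le> e"
        by (meson LIMSEQ_le_const2)
    qed
  qed
  have l0: "l [] = 0"
  proof -
    have "(\<lambda>k. g k []) \<longlonglongrightarrow> 0" using bg by (simp add: bnd_def)
    then show ?thesis using conv[of "[]"] unfolding l_def by (metis LIMSEQ_unique)
  qed
  obtain N1 where N1: "\<forall>i\<ge>N1. \<forall>W. cmod (g i W - l W) * wt (length W) \<le> 1" using key[of 1] by auto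
  have bl: "bnd l"
  proof (rule bnd_intro[where g=l and B="nrm (g N1) + 1"])
    show "l [] = 0" by (rule l0)
  next
    fix W
    have "cmod (l W) * wt (length W) \<le> (cmod (g N1 W) + cmod (g N1 W - l W)) * wt (length W)"
      proof (rule mult_right_mono)
      show "cmod (l W) \<le> cmod (g N1 W) + cmod (g N1 W - l W)"
        by (metis norm_triangle_sub norm_minus_commute)
    qed (auto intro: less_imp_le wt_pos)
    also have "\<dots> \<le> nrm (g N1) + 1"
    proof -
      have "cmod (g N1 W - l W) * wt (length W) \<le> 1" using N1 by blast
      then show ?thesis using nrm_upper[OF bg, of N1 W] by (simp add: distrib_right)
    qed
    finally show "cmod (l W) * wt (length W) \<le> nrm (g N1) + 1" .
  qed
  have "(\<lambda>k. nrm (\<lambda>W. g k W + - l W)) \<longlonglongrightarrow> 0"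
  proof (rule LIMSEQ_I)
    fix r :: real assume r: "0 < r"
    obtain N where N: "\<forall>i\<ge>N. \<forall>W. cmod (g i W - l W) * wt (length W) \<le> r/2" using key[of "r/2"] r by auto
    show "\<exists>no. \<forall>n\<ge>no. norm (nrm (\<lambda>W. g n W + - l W) - 0) < r"
    proof (intro exI allI impI)
      fix n assume n: "N \<le> n"
      have "nrm (\<lambda>W. g n W + - l W) \<le> r/2" using N n by (intro nrm_least) simp
      moreover have "0 \<le> nrm (\<lambda>W. g n W + - l W)" by (intro nrm_nonneg bnd_add bg bnd_neg bl)
      ultimately show "norm (nrm (\<lambda>W. g n W + - l W) - 0) < r" using r by simp
    qed
  qed
  with bl show ?thesis by blast
qed




definition E :: "(nat list \<Rightarrow> complex) \<Rightarrow> nat \<Rightarrow> real \<Rightarrow> complex" where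
  "E g = (\<lambda>n t. g (list_decode n))"
definition D :: "(nat \<Rightarrow> real \<Rightarrow> complex) \<Rightarrow> nat list \<Rightarrow> complex" where
  "D f = (\<lambda>W. f (list_encode W) 0)"
lemma DE[simp]: "D (E g) = g" by (simp add: D_def E_def)
lemma E_inj[simp]: "E g = E h \<longleftrightarrow> g = h" by (metis DE)
lemma E_mem[simp]: "E g \<in> E ` S \<longleftrightarrow> g \<in> S" by (metis DE image_iff)
lemma ball_E[simp]: "(\<forall>x\<in>E ` S. P x) \<longleftrightarrow> (\<forall>g\<in>S. P (E g))" by auto
lemma bex_E[simp]: "(\<exists>x\<in>E ` S. P x) \<longleftrightarrow> (\<exists>g\<in>S. P (E g))" by auto

definition Alg :: "(nat \<Rightarrow> real \<Rightarrow> complex) balg" where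
  "Alg = \<lparr>ba_carrier = E ` {g. bnd g}, ba_zero = E (\<lambda>_. 0),
     ba_add = \<lambda>x y. E (\<lambda>W. D x W + D y W), ba_neg = \<lambda>x. E (\<lambda>W. - D x W),
     ba_smul = \<lambda>c x. E (\<lambda>W. c * D x W), ba_mul = \<lambda>x y. E (conv (D x) (D y)),
     ba_norm = \<lambda>x. nrm (D x)\<rparr>"

lemma Alg_simps[simp]: "ba_carrier Alg = E ` {g. bnd g}" "ba_zero Alg = E (\<lambda>_. 0)"
  "ba_add Alg x y = E (\<lambda>W. D x W + D y W)" "ba_neg Alg x = E (\<lambda>W. - D x W)"
  "ba_smul Alg c x = E (\<lambda>W. c * D x W)" "ba_mul Alg x y = E (conv (D x) (D y))"
  "ba_norm Alg x = nrm (D x)"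
  "ba_sub Alg x y = E (\<lambda>W. D x W + - D y W)"
  by (simp_all add: Alg_def ba_sub_def)

lemma normed: "normed_algebra Alg"
  unfolding normed_algebra_def Let_def Alg_simps ball_E
  apply (intro conjI)
  subgoal by (simp add: bnd_zero)
  subgoal by (simp add: bnd_add bnd_conv)
  subgoal by (simp add: bnd_neg)
  subgoal by (simp add: bnd_smul)
  subgoal by (simp add: add.assoc)
  subgoal by (simp add: add.commute)
  subgoal by simp
  subgoal by simp
  subgoal by (simp add: distrib_left)
  subgoal by (simp add: distrib_right)
  subgoal by (simp add: mult.assoc)
  subgoal by simp
  subgoal by (simp add: conv_assoc bnd_def)
  subgoal by (simp add: conv_add_right)
  subgoal by (simp add: conv_add_left)
  subgoal by (simp add: conv_smul_left conv_smul_right)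
  subgoal by (simp add: nrm_nonneg nrm_eq0)
  subgoal by (simp add: nrm_add)
  subgoal by (simp add: nrm_smul)
  subgoal by (simp add: nrm_conv)
  done




lemma carrier_D: "x \<in> ba_carrier Alg \<Longrightarrow> bnd (D x) \<and> x = E (D x)"
  by auto

lemma banach: "banach_algebra Alg"
  unfolding banach_algebra_def
proof (intro conjI normed allI impI)
  fix f :: "nat \<Rightarrow> nat \<Rightarrow> real \<Rightarrow> complex"
  assume h: "(\<forall>k. f k \<in> ba_carrier Alg) \<and>
    (\<forall>e>0. \<exists>N. \<forall>i\<ge>N. \<forall>j\<ge>N. ba_norm Alg (ba_sub Alg (f i) (f j)) < e)"
  have bg: "\<And>k. bnd (D (f k))" using h carrier_D by blast
  have cau: "\<forall>e>0. \<exists>N. \<forall>i\<ge>N. \<forall>j\<ge>N. nrm (\<lambda>W. D (f i) W + - D (f j) W) < e"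
    using h by simp
  obtain l where l: "bnd l" "(\<lambda>k. nrm (\<lambda>W. D (f k) W + - l W)) \<longlonglongrightarrow> 0"
    using complete_core[OF bg cau] by blast
  show "\<exists>l\<in>ba_carrier Alg. (\<lambda>k. ba_norm Alg (ba_sub Alg (f k) l)) \<longlonglongrightarrow> 0"
    using l by (intro bexI[of _ "E l"]) auto
qed

definition lt :: "nat \<Rightarrow> nat list \<Rightarrow> complex" where
  "lt n = (\<lambda>W. if W = [n] then 1 else 0)"

lemma bnd_lt: "bnd (lt n)"
  by (rule bnd_intro[where B=1]) (auto simp: lt_def wt_le1)
lemma nrm_lt: "nrm (lt n) \<le> 1"
  by (rule nrm_least) (auto simp: lt_def wt_le1)

lemma nonzero: "ba_carrier Alg \<noteq> {ba_zero Alg}"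
proof
  assume h: "ba_carrier Alg = {ba_zero Alg}"
  have "E (lt 0) \<in> ba_carrier Alg" using bnd_lt by simp
  then have "E (lt 0) = E (\<lambda>_. 0)" using h by (metis singletonD Alg_simps(2))
  then have "lt 0 = (\<lambda>_. 0)" by simp
  then show False by (metis lt_def zero_neq_one)
qed

lemma pow_identity:
  fixes K s :: real
  assumes "s^2 = 1/2"
  shows "(1/2)^(Suc n) * K * (K * s^n)^(Suc n) = (K * s^(Suc n))^(Suc (Suc n))"
proof -
  have e: "2 * Suc n + n * Suc n = Suc n * Suc (Suc n)" by (simp add: algebra_simps)
  have h1: "(1/2::real)^(Suc n) = s^(2 * Suc n)"
  proof -
    have "(1/2::real)^(Suc n) = (s^2)^(Suc n)" by (simp only: assms)
    also have "\<dots> = s^(2 * Suc n)" by (simp only: power_mult)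
    finally show ?thesis .
  qed
  have h2: "(K * s^n)^(Suc n) = K^(Suc n) * s^(n * Suc n)" by (simp only: power_mult_distrib power_mult)
  have h3: "(K * s^(Suc n))^(Suc (Suc n)) = K^(Suc (Suc n)) * s^(Suc n * Suc (Suc n))"
    by (simp only: power_mult_distrib power_mult)
  have h4: "s^(Suc n * Suc (Suc n)) = s^(2 * Suc n) * s^(n * Suc n)"
    by (simp only: e[symmetric] power_add)
  have h5: "K^(Suc (Suc n)) = K * K^(Suc n)" by simp
  show ?thesis unfolding h1 h2 h3 h4 h5 by (simp only: mult_ac)
qed

lemma setpow_bound:
  assumes M: "M \<subseteq> ba_carrier Alg" and K: "\<And>x. x \<in> M \<Longrightarrow> nrm (D x) \<le> K" "0 \<le> K"
    and s: "s^2 = 1/2" "0 \<le> s"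
  shows "x \<in> ba_setpow Alg M n \<Longrightarrow> x \<in> ba_carrier Alg \<and> (\<forall>W. length W \<le> n \<longrightarrow> D x W = 0)
     \<and> nrm (D x) \<le> (K * s^n)^(Suc n)"
proof (induction n arbitrary: x)
  case 0
  then have x: "x \<in> M" by simp
  then have "bnd (D x)" using M carrier_D by blast
  then show ?case using x M K by (auto simp: bnd_def)
next
  case (Suc n)
  then obtain a y where xy: "x = ba_mul Alg a y" "a \<in> M" "y \<in> ba_setpow Alg M n" by auto
  from Suc.IH[OF xy(3)] have y: "bnd (D y)" "\<And>W. length W \<le> n \<Longrightarrow> D y W = 0"
      "nrm (D y) \<le> (K * s^n)^(Suc n)"
    using carrier_D by blast+
  have a: "bnd (D a)" "nrm (D a) \<le> K" using xy(2) M K carrier_D by blast+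
  have Dx: "D x = conv (D a) (D y)" using xy by simp
  have van: "D x W = 0" if "length W \<le> Suc n" for W
    unfolding Dx conv_def
  proof (intro sum.neutral ballI)
    fix i assume i: "i \<in> {..<length W}"
    show "D a (take i W) * D y (drop i W) = 0"
    proof (cases "i = 0")
      case True then show ?thesis using a by (simp add: bnd_def)
    next
      case False then show ?thesis using y(2)[of "drop i W"] that by simp
    qed
  qed
  have "nrm (D x) \<le> (1/2)^(Suc n) * nrm (D a) * nrm (D y)"
    unfolding Dx by (rule nrm_conv_k[OF a(1) y(1)]) (simp add: y(2))
  also have "\<dots> \<le> (1/2)^(Suc n) * K * (K * s^n)^(Suc n)"
    using a y nrm_nonneg K(2) by (intro mult_mono mult_left_mono) auto
  also have "\<dots> = (K * s^(Suc n))^(Suc (Suc n))" by (rule pow_identity[OF s(1)])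
  finally show ?case using van Dx bnd_conv[OF a(1) y(1)] xy(1) by simp
qed

lemma precompact_bound:
  assumes "ba_precompact Alg M"
  shows "M \<subseteq> ba_carrier Alg \<and> (\<exists>K\<ge>0. \<forall>x\<in>M. nrm (D x) \<le> K)"
proof -
  have Mc: "M \<subseteq> ba_carrier Alg" using assms by (simp add: ba_precompact_def)
  obtain F where F: "finite F" "F \<subseteq> ba_carrier Alg"
    "\<forall>x\<in>M. \<exists>y\<in>F. ba_norm Alg (ba_sub Alg x y) < 1"
    using assms unfolding ba_precompact_def by (meson zero_less_one)
  define K where "K = 1 + (\<Sum>y\<in>F. nrm (D y))"
  have Fn: "\<And>y. y \<in> F \<Longrightarrow> 0 \<le> nrm (D y)" using F(2) carrier_D nrm_nonneg by blast
  have K0: "0 \<le> K" unfolding K_def using Fn by (simp add: sum_nonneg add_nonneg_nonneg)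
  have "nrm (D x) \<le> K" if x: "x \<in> M" for x
  proof -
    obtain y where y: "y \<in> F" "nrm (\<lambda>W. D x W + - D y W) < 1" using F(3) x by auto
    have bx: "bnd (D x)" and bY: "bnd (D y)" using x y Mc F(2) carrier_D by blast+
    have "nrm (D x) = nrm (\<lambda>W. (D x W + - D y W) + D y W)" by simp
    also have "\<dots> \<le> nrm (\<lambda>W. D x W + - D y W) + nrm (D y)"
      by (rule nrm_add[OF bnd_add[OF bx bnd_neg[OF bY]] bY])
    also have "nrm (D y) \<le> (\<Sum>y\<in>F. nrm (D y))"
      using y(1) F(1) Fn by (intro member_le_sum) auto
    finally show ?thesis using y(2) unfolding K_def by linarith
  qed
  with Mc K0 show ?thesis by blast
qed

lemma cqn: "compactly_quasinilpotent Alg"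
  unfolding compactly_quasinilpotent_def
proof (intro allI impI)
  fix M assume pc: "ba_precompact Alg M"
  obtain K where K: "0 \<le> K" "\<forall>x\<in>M. nrm (D x) \<le> K" and Mc: "M \<subseteq> ba_carrier Alg"
    using precompact_bound[OF pc] by blast
  define s :: real where "s = sqrt (1/2)"
  have s: "s^2 = 1/2" "0 \<le> s" "s < 1" unfolding s_def by auto
  have bd: "ba_setnorm Alg (ba_setpow Alg M n) \<le> (K * s^n)^(Suc n)" for n
    unfolding ba_setnorm_def
  proof (rule cSup_least)
    show "insert 0 (ba_norm Alg ` ba_setpow Alg M n) \<noteq> {}" by simp
    fix z assume "z \<in> insert 0 (ba_norm Alg ` ba_setpow Alg M n)"
    then show "z \<le> (K * s^n)^(Suc n)"
      using setpow_bound[OF Mc _ K(1) s(1,2), where n=n] K(2) K(1) s(2) by auto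
  qed
  have nn: "0 \<le> ba_setnorm Alg (ba_setpow Alg M n)" for n
    unfolding ba_setnorm_def
  proof (rule cSup_upper)
    show "bdd_above (insert 0 (ba_norm Alg ` ba_setpow Alg M n))"
      unfolding bdd_above_def
      using setpow_bound[OF Mc _ K(1) s(1,2), where n=n] K(2) K(1) s(2)
      by (intro exI[of _ "(K * s^n)^(Suc n)"]) auto
  qed simp
  have up: "ba_setnorm Alg (ba_setpow Alg M n) powr (1 / real (Suc n)) \<le> K * s^n" for n
  proof -
    have Ks: "0 \<le> K * s^n" using K(1) s(2) by simp
    have "ba_setnorm Alg (ba_setpow Alg M n) powr (1 / real (Suc n))
          \<le> ((K * s^n)^(Suc n)) powr (1 / real (Suc n))"
      by (rule powr_mono2) (use nn bd in auto)
    also have "\<dots> = K * s^n"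
    proof (cases "K * s^n = 0")
      case True then show ?thesis unfolding True by simp
    next
      case False
      have pos: "0 < K * s^n" using Ks False by (metis less_eq_real_def)
      have "(K * s^n)^(Suc n) = (K * s^n) powr real (Suc n)" by (rule powr_realpow[symmetric, OF pos])
      then have "((K * s^n)^(Suc n)) powr (1 / real (Suc n)) = (K * s^n) powr (real (Suc n) * (1 / real (Suc n)))"
        by (simp only: powr_powr)
      also have "real (Suc n) * (1 / real (Suc n)) = 1" by simp
      finally show ?thesis using pos by simp
    qed
    finally show ?thesis .
  qed
  have lim: "(\<lambda>n. K * s^n) \<longlonglongrightarrow> 0"
    using s by (intro tendsto_mult_right_zero LIMSEQ_power_zero) auto
  show "(\<lambda>n. ba_setnorm Alg (ba_setpow Alg M n) powr (1 / real (Suc n))) \<longlonglongrightarrow> 0"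
  proof (rule tendsto_sandwich[OF _ _ tendsto_const lim])
    show "\<forall>\<^sub>F n in sequentially. 0 \<le> ba_setnorm Alg (ba_setpow Alg M n) powr (1 / real (Suc n))"
      by (rule always_eventually) simp
    show "\<forall>\<^sub>F n in sequentially. ba_setnorm Alg (ba_setpow Alg M n) powr (1 / real (Suc n)) \<le> K * s^n"
      by (rule always_eventually) (use up in blast)
  qed
qed




lemma conv_lt: assumes "d [] = 0"
  shows "conv (lt n) d q = (case q of [] \<Rightarrow> 0 | c # r \<Rightarrow> if c = n then d r else 0)"
proof (cases q)
  case Nil then show ?thesis by (simp add: conv_nil)
next
  case (Cons c r)
  have "conv (lt n) d (c # r) = lt n [] * d (c # r) + (\<Sum>i<length r. lt n (c # take i r) * d (drop i r))"
    unfolding conv_def by (simp del: sum.lessThan_Suc add: sum.lessThan_Suc_shift)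
  also have "\<dots> = (\<Sum>i<length r. if i = 0 then (if c = n then d r else 0) else 0)"
  proof -
    have "lt n [] = 0" by (simp add: lt_def)
    moreover have "(\<Sum>i<length r. lt n (c # take i r) * d (drop i r)) =
        (\<Sum>i<length r. if i = 0 then (if c = n then d r else 0) else 0)"
      by (intro sum.cong refl) (auto simp: lt_def)
    ultimately show ?thesis by simp
  qed
  also have "\<dots> = (if c = n then d r else 0)"
    using assms by (cases r) auto
  finally show ?thesis using Cons by simp
qed

lemma conv_lt_Cons: "d [] = 0 \<Longrightarrow> i < length W \<Longrightarrow>
  conv (lt n) d (drop i W) = (if W ! i = n then d (drop (Suc i) W) else 0)"
  by (simp add: conv_lt Cons_nth_drop_Suc[symmetric])

lemma convA:
  assumes "n \<notin> set p" "n \<notin> set r" "d [] = 0"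
  shows "conv a (conv (lt n) d) (p @ n # r) = a p * d r"
proof -
  let ?W = "p @ n # r"
  have nth: "?W ! i = n \<longleftrightarrow> i = length p" if "i < length ?W" for i
  proof (cases "i < length p")
    case True then show ?thesis using assms(1) by (auto simp: nth_append dest: nth_mem)
  next
    case False
    then show ?thesis using that assms(2)
      by (auto simp: nth_append nth_Cons' dest: nth_mem split: if_splits)
  qed
  have "conv a (conv (lt n) d) ?W = (\<Sum>i<length ?W. a (take i ?W) * conv (lt n) d (drop i ?W))"
    by (simp only: conv_def)
  also have "\<dots> = (\<Sum>i<length ?W. if i = length p then a p * d r else 0)"
  proof (intro sum.cong refl)
    fix i assume i: "i \<in> {..<length ?W}"
    then have il: "i < length ?W" by simp
    have e0: "conv (lt n) d (drop i ?W) = (if ?W ! i = n then d (drop (Suc i) ?W) else 0)"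
      by (rule conv_lt_Cons[where d=d, OF assms(3) il])
    show "a (take i ?W) * conv (lt n) d (drop i ?W) = (if i = length p then a p * d r else 0)"
    proof (cases "i = length p")
      case True then show ?thesis using e0 nth[OF il] by simp
    next
      case False then show ?thesis using e0 nth[OF il] by simp
    qed
  qed
  also have "\<dots> = a p * d r" by simp
  finally show ?thesis .
qed

lemma convB:
  assumes "n \<notin> set W" "d [] = 0"
  shows "conv a (conv (lt n) d) W = 0"
proof -
  have "conv a (conv (lt n) d) W = (\<Sum>i<length W. a (take i W) * conv (lt n) d (drop i W))"
    by (simp add: conv_def)
  also have "\<dots> = 0"
  proof (rule sum.neutral, rule ballI)
    fix i assume i: "i \<in> {..<length W}"
    then have il: "i < length W" by simp
    then have "W ! i \<noteq> n" using assms(1) nth_mem by fastforce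
    then show "a (take i W) * conv (lt n) d (drop i W) = 0"
      by (simp add: conv_lt_Cons[where d=d, OF assms(2) il])
  qed
  finally show ?thesis .
qed

lemma qn0: "ba_qnorm Alg {ba_zero Alg} x = nrm (D x)"
  unfolding ba_qnorm_def by simp

lemma no_hypo:
  assumes I: "ba_ideal Alg (ba_carrier Alg) I" and I0: "I \<noteq> {ba_zero Alg}"
  shows "\<not> ba_hypocompact Alg I"
proof
  assume hyp: "ba_hypocompact Alg I"
  let ?Z = "ba_zero Alg"
  have Ic: "I \<subseteq> ba_carrier Alg" and ZI: "?Z \<in> I"
    and Imul: "\<And>b x. b \<in> ba_carrier Alg \<Longrightarrow> x \<in> I \<Longrightarrow> ba_mul Alg b x \<in> I \<and> ba_mul Alg x b \<in> I"
    and Ism: "\<And>c x. x \<in> I \<Longrightarrow> ba_smul Alg c x \<in> I"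
    using I unfolding ba_ideal_def by blast+
  have conv_zero_left: "conv (\<lambda>_. 0) b = (\<lambda>_. 0)" for b by (simp add: conv_def)
  have J1: "ba_ideal Alg I {?Z}"
    unfolding ba_ideal_def using ZI by (auto simp: conv_zero_right conv_zero_left)
  have J2: "ba_closed_in Alg I {?Z}"
    unfolding ba_closed_in_def
  proof (intro allI impI)
    fix f x assume h: "(\<forall>k. f k \<in> {?Z}) \<and> x \<in> I \<and> (\<lambda>k. ba_norm Alg (ba_sub Alg (f k) x)) \<longlonglongrightarrow> 0"
    then have bx: "bnd (D x)" "x = E (D x)" using Ic carrier_D by blast+
    from h have fz: "\<And>k. f k = E (\<lambda>_. 0)" by simp
    from h have "(\<lambda>k. ba_norm Alg (ba_sub Alg (f k) x)) \<longlonglongrightarrow> 0" by blast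
    then have "(\<lambda>k. nrm (\<lambda>W. - D x W)) \<longlonglongrightarrow> 0" by (simp add: fz)
    then have "nrm (D x) = 0" using nrm_neg[OF bx(1)] by (simp add: LIMSEQ_const_iff)
    then have "D x = (\<lambda>_. 0)" using nrm_eq0[OF bx(1)] by simp
    then show "x \<in> {?Z}" using bx(2) by simp
  qed
  have J3: "{?Z} \<noteq> I" using I0 by simp
  obtain a where aI: "a \<in> I" and aZ: "a \<notin> {?Z}" and comp: "ba_compact_elem_quot Alg I {?Z} a"
    using hyp J1 J2 J3 unfolding ba_hypocompact_def by blast
  have bA: "bnd (D a)" and aE: "a = E (D a)" using aI Ic carrier_D by blast+
  define A where "A = D a"
  have "A \<noteq> (\<lambda>_. 0)" using aZ aE unfolding A_def by auto
  then obtain v where v: "A v \<noteq> 0" by auto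
  have nA: "0 < nrm A" using nrm_nonneg[OF bA] nrm_eq0[OF bA] \<open>A \<noteq> (\<lambda>_. 0)\<close> unfolding A_def by fastforce
  define N where "N = Suc (sum_list v)"
  define nk where "nk k = N + 2*k" for k :: nat
  define mk where "mk k = N + 2*k + 1" for k :: nat
  have fresh: "nk k \<notin> set v" "mk k \<notin> set v" for k
    using member_le_sum_list[of _ v] unfolding nk_def mk_def N_def by fastforce+
  define c where "c = complex_of_real (1 / nrm A)"
  have c0: "c \<noteq> 0" using nA unfolding c_def by simp
  define X where "X k = ba_smul Alg c (ba_mul Alg (E (lt (nk k))) (ba_mul Alg a (E (lt (mk k)))))" for k
  have ltc: "E (lt n) \<in> ba_carrier Alg" for n using bnd_lt by simp
  have XI: "X k \<in> I" for k
    unfolding X_def using Imul ltc aI Ism by blast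
  have DX: "D (X k) = (\<lambda>W. c * conv (lt (nk k)) (conv A (lt (mk k))) W)" for k
    unfolding X_def A_def by simp
  have nX: "nrm (D (X k)) \<le> 1" for k
  proof -
    have bA': "bnd A" using bA unfolding A_def .
    have c1: "nrm (conv A (lt (mk k))) \<le> nrm A"
    proof -
      have "nrm (conv A (lt (mk k))) \<le> nrm A * nrm (lt (mk k))" by (rule nrm_conv[OF bA' bnd_lt])
      also have "\<dots> \<le> nrm A * 1" by (rule mult_left_mono[OF nrm_lt nrm_nonneg[OF bA']])
      finally show ?thesis by simp
    qed
    have "nrm (conv (lt (nk k)) (conv A (lt (mk k)))) \<le> nrm (lt (nk k)) * nrm (conv A (lt (mk k)))"
      by (rule nrm_conv[OF bnd_lt bnd_conv[OF bA' bnd_lt]])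
    also have "\<dots> \<le> 1 * nrm A"
      by (rule mult_mono[OF nrm_lt c1]) (auto intro: nrm_nonneg bnd_conv bA' bnd_lt)
    finally have "nrm (conv (lt (nk k)) (conv A (lt (mk k)))) \<le> nrm A" by simp
    then have "cmod c * nrm (conv (lt (nk k)) (conv A (lt (mk k)))) \<le> cmod c * nrm A"
      by (rule mult_left_mono) simp
    also have "\<dots> = 1" using nA unfolding c_def by (simp add: norm_divide)
    finally show ?thesis unfolding DX
      by (subst nrm_smul) (intro bnd_conv bnd_lt bA[folded A_def], simp)
  qed
  define P where "P k = ba_mul Alg a (ba_mul Alg (X k) a)" for k
  have DP: "D (P k) = (\<lambda>W. c * conv A (conv (lt (nk k)) (conv A (conv (lt (mk k)) A))) W)" for k
  proof -
    have "conv (conv (lt (nk k)) (conv A (lt (mk k)))) A = conv (lt (nk k)) (conv (conv A (lt (mk k))) A)"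
      by (rule conv_assoc) (simp add: conv_nil)
    also have "conv (conv A (lt (mk k))) A = conv A (conv (lt (mk k)) A)"
      by (rule conv_assoc) (simp add: lt_def)
    finally have e: "conv (conv (lt (nk k)) (conv A (lt (mk k)))) A = conv (lt (nk k)) (conv A (conv (lt (mk k)) A))" .
    show ?thesis unfolding P_def
      by (simp add: DX conv_smul_left conv_smul_right e flip: A_def)
  qed
  have Pc: "P k \<in> ba_carrier Alg" for k
    unfolding P_def using Imul aI XI Ic by blast
  define Wk where "Wk k = v @ nk k # (v @ mk k # v)" for k
  have lenW: "length (Wk k) = 3 * length v + 2" for k unfolding Wk_def by simp
  have same: "D (P k) (Wk k) = c * (A v * (A v * A v))" for k
  proof -
    have nm: "nk k \<noteq> mk k" unfolding nk_def mk_def by simp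
    have "conv A (conv (lt (mk k)) A) (v @ mk k # v) = A v * A v"
      by (rule convA) (use fresh bA[folded A_def] in \<open>auto simp: bnd_def\<close>)
    moreover have "conv A (conv (lt (nk k)) (conv A (conv (lt (mk k)) A))) (Wk k)
        = A v * conv A (conv (lt (mk k)) A) (v @ mk k # v)"
      unfolding Wk_def by (rule convA) (use fresh nm in \<open>auto simp: conv_nil\<close>)
    ultimately show ?thesis by (simp add: DP)
  qed
  have other: "D (P k') (Wk k) = 0" if "k' \<noteq> k" for k k'
  proof -
    have "nk k' \<notin> set (Wk k)" using fresh[of k'] that unfolding Wk_def nk_def mk_def by auto
    then show ?thesis unfolding DP by (simp add: convB conv_nil)
  qed
  define \<delta> where "\<delta> = cmod (c * (A v * (A v * A v))) * wt (3 * length v + 2)"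
  have d0: "0 < \<delta>" unfolding \<delta>_def using c0 v wt_pos by simp
  obtain F where F: "finite F" "F \<subseteq> I"
    "\<forall>x\<in>I. ba_qnorm Alg {?Z} x \<le> 1 \<longrightarrow>
       (\<exists>y\<in>F. ba_qnorm Alg {?Z} (ba_sub Alg (ba_mul Alg a (ba_mul Alg x a)) y) < \<delta>/2)"
    using comp d0 unfolding ba_compact_elem_quot_def by (meson half_gt_zero)
  have "\<forall>k. \<exists>y\<in>F. nrm (\<lambda>W. D (P k) W + - D y W) < \<delta>/2"
  proof
    fix k
    have q1: "ba_qnorm Alg {?Z} (X k) \<le> 1" using nX[of k] by (simp only: qn0)
    then have "\<exists>y\<in>F. ba_qnorm Alg {?Z} (ba_sub Alg (ba_mul Alg a (ba_mul Alg (X k) a)) y) < \<delta>/2"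
      using F(3) XI[of k] by blast
    then obtain y where y: "y \<in> F"
      "ba_qnorm Alg {?Z} (ba_sub Alg (P k) y) < \<delta>/2" unfolding P_def by blast
    have "ba_qnorm Alg {?Z} (ba_sub Alg (P k) y) = nrm (\<lambda>W. D (P k) W + - D y W)"
      by (simp only: qn0 Alg_simps(8) DE)
    then show "\<exists>y\<in>F. nrm (\<lambda>W. D (P k) W + - D y W) < \<delta>/2" using y by auto
  qed
  then obtain f where f: "\<And>k. f k \<in> F" "\<And>k. nrm (\<lambda>W. D (P k) W + - D (f k) W) < \<delta>/2"
    by metis
  have "\<not> inj f"
  proof
    assume "inj f"
    moreover have "finite (range f)" using f(1) F(1) by (meson finite_subset image_subsetI)
    ultimately show False using finite_imageD by blast
  qed
  then obtain k k' where kk: "k \<noteq> k'" "f k = f k'" unfolding inj_def by blast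
  define y where "y = f k"
  have bY: "bnd (D y)" using f(1) F(2) Ic carrier_D unfolding y_def by blast
  have bP: "bnd (D (P j))" for j using Pc carrier_D by blast
  have u1: "cmod (D (P k) (Wk k) - D y (Wk k)) * wt (length (Wk k)) \<le> nrm (\<lambda>W. D (P k) W + - D y W)"
    using nrm_upper[OF bnd_add[OF bP[of k] bnd_neg[OF bY]], of "Wk k"] by simp
  have u2: "cmod (D (P k') (Wk k) - D y (Wk k)) * wt (length (Wk k)) \<le> nrm (\<lambda>W. D (P k') W + - D y W)"
    using nrm_upper[OF bnd_add[OF bP[of k'] bnd_neg[OF bY]], of "Wk k"] by simp
  have "\<delta> = cmod (D (P k) (Wk k) - D (P k') (Wk k)) * wt (length (Wk k))"
    unfolding \<delta>_def using same[of k] other[of k' k] kk(1) lenW by simp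
  also have "\<dots> \<le> (cmod (D (P k) (Wk k) - D y (Wk k)) + cmod (D (P k') (Wk k) - D y (Wk k))) * wt (length (Wk k))"
  proof (rule mult_right_mono)
    show "cmod (D (P k) (Wk k) - D (P k') (Wk k)) \<le> cmod (D (P k) (Wk k) - D y (Wk k)) + cmod (D (P k') (Wk k) - D y (Wk k))"
      by (metis norm_triangle_ineq4 diff_diff_eq2 diff_add_cancel norm_minus_commute
          norm_triangle_sub add.commute order_trans norm_diff_triangle_ineq)
  qed (simp add: wt_pos less_imp_le)
  also have "\<dots> < \<delta>/2 + \<delta>/2"
    using u1 u2 f(2)[of k] f(2)[of k'] kk(2) unfolding y_def by (simp add: distrib_right)
  finally show False by simp
qed


theorem proposition3p4:
  shows "\<exists>A :: (nat \<Rightarrow> real \<Rightarrow> complex) balg.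
    banach_algebra A \<and> ba_carrier A \<noteq> {ba_zero A} \<and>
    compactly_quasinilpotent A \<and>
    (\<forall>I. ba_ideal A (ba_carrier A) I \<and> I \<noteq> {ba_zero A} \<longrightarrow> \<not> ba_hypocompact A I)"
  using banach nonzero cqn no_hypo by blast

end
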